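(* Let $(g,f)$ be a Riordan matrix with $f(t)=\sum_{j\ge1}f_jt^j$; set $f_0=f_{-1}=0$ and $\tilde f_j=f_{j-1}$ for $j\ge0$ (so $\tilde f_0=\tilde f_1=0$). For a sequence $(b_j)_{j\ge0}$ set $\tilde b_0=0$ and $\tilde b_j=b_{j-1}$ for $j\ge1$. Then $(b_j)_{j\ge0}$ is a type-I $B$-sequence of $(g,f)$ if and only if $f_1=1$, $f_3=f_2^2$, for every $\ell\ge1$ $$b_{\ell-1}=f_{2\ell}-\sum_{\mathbf i=(i_1,\dots,i_k)\in\mathcal D_{2\ell,\ell-1}}\tilde b_k\,\tilde f_{i_1}\tilde f_{i_2}\cdots\tilde f_{i_k},$$ and for every $\ell\ge2$ $$f_{2\ell+1}=\sum_{\mathbf i=(i_1,\dots,i_k)\in\mathcal D_{2\ell+1}}\tilde b_k\,\tilde f_{i_1}\cdots\tilde f_{i_k} = f_2f_{2\ell}+\sum_{\mathbf i=(i_1,\dots,i_k)\in\mathcal D'_{2\ell+1,\ell}}\tilde b_k\,\tilde f_{i_1}\cdots\tilde f_{i_k}.$$ (Thus $b_0=f_2$, $b_1=f_4-b_0^3$, $f_5=b_0^4+3b_0b_1$, $b_2=f_6-b_0^5-5b_0^2b_1$, etc., with $f_{2\ell}$ arbitrary.)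
   Context: Let $K$ be $\mathbb{R}$ or $\mathbb{C}$. A (proper) Riordan matrix is a pair $(g,f)$ of formal power series in $K[[t]]$ with $g(0)=1$, $f(0)=0$, $f'(0)\neq 0$, identified with the infinite lower triangular matrix $(d_{n,k})_{n,k\ge0}$, $d_{n,k}=[t^n]g(t)f(t)^k$; we set $d_{n,k}=0$ if $n<0$, $k<0$ or $k>n$. A type-I $B$-sequence of $(g,f)$ is a sequence $(b_j)_{j\ge0}$ such that $d_{n+1,k}=d_{n,k-1}+\sum_{j\ge0}b_j d_{n-j,k+j}$ for all $n\ge0$ and $k\ge1$. For positive integers $n,m,k$, $\mathcal D_{n,m,k}$ is the set of tuples $(i_1,\dots,i_k)$ of positive integers with $i_1+\cdots+i_k=n$ (here $k\le m$); $\mathcal D_{n,m}=\bigcup_{k=1}^m\mathcal D_{n,m,k}$ (compositions of $n$ into at most $m$ parts), $\mathcal D_n=\mathcal D_{n,n}$ (all compositions of $n$), and $\mathcal D'_{n,m}=\bigcup_{k=2}^m\mathcal D_{n,m,k}$. By convention $\mathcal D_{2,0}=\emptyset$ (empty sums are $0$). In each sum, $k$ is the length of the composition $\mathbf i$. *)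

theory Defs
  imports "HOL-Computational_Algebra.Formal_Power_Series"
begin

definition riordan :: "'a::field fps \<Rightarrow> 'a fps \<Rightarrow> bool" where
  "riordan g f \<longleftrightarrow> fps_nth g 0 = 1 \<and> fps_nth f 0 = 0 \<and> fps_nth f 1 \<noteq> 0"

definition riordan_entry :: "'a::field fps \<Rightarrow> 'a fps \<Rightarrow> nat \<Rightarrow> nat \<Rightarrow> 'a" where
  "riordan_entry g f n k = (if k \<le> n then fps_nth (g * f ^ k) n else 0)"

text \<open>Type-I B-sequence. The sum over j \<ge> 0 is restricted to j \<le> n, since
  d_{n-j,k+j} = 0 for j > n (negative row index).\<close>
definition is_B_seq_I :: "'a::field fps \<Rightarrow> 'a fps \<Rightarrow> (nat \<Rightarrow> 'a) \<Rightarrow> bool" where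
  "is_B_seq_I g f b \<longleftrightarrow>
     (\<forall>n k. 1 \<le> k \<longrightarrow>
        riordan_entry g f (n + 1) k =
          riordan_entry g f n (k - 1) + (\<Sum>j\<le>n. b j * riordan_entry g f (n - j) (k + j)))"

definition comps_between :: "nat \<Rightarrow> nat \<Rightarrow> nat \<Rightarrow> nat list set" where
  "comps_between n lo hi =
     {is. (\<forall>i\<in>set is. 0 < i) \<and> sum_list is = n \<and> lo \<le> length is \<and> length is \<le> hi}"

definition comps_le :: "nat \<Rightarrow> nat \<Rightarrow> nat list set" where
  "comps_le n m = comps_between n 1 m"

definition comps :: "nat \<Rightarrow> nat list set" where
  "comps n = comps_le n n"

definition comps' :: "nat \<Rightarrow> nat \<Rightarrow> nat list set" where
  "comps' n m = comps_between n 2 m"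

definition ftil :: "'a::field fps \<Rightarrow> nat \<Rightarrow> 'a" where
  "ftil f j = (if j = 0 then 0 else fps_nth f (j - 1))"

definition btil :: "(nat \<Rightarrow> 'a::field) \<Rightarrow> nat \<Rightarrow> 'a" where
  "btil b k = (if k = 0 then 0 else b (k - 1))"

definition comp_term :: "'a::field fps \<Rightarrow> (nat \<Rightarrow> 'a) \<Rightarrow> nat list \<Rightarrow> 'a" where
  "comp_term f b is = btil b (length is) * prod_list (map (ftil f) is)"

definition thm2p4_conditions :: "'a::field fps \<Rightarrow> (nat \<Rightarrow> 'a) \<Rightarrow> bool" where
  "thm2p4_conditions f b \<longleftrightarrow>
     fps_nth f 1 = 1 \<and> fps_nth f 3 = (fps_nth f 2)^2 \<and>
     (\<forall>l\<ge>1. b (l - 1) = fps_nth f (2*l) - (\<Sum>is\<in>comps_le (2*l) (l - 1). comp_term f b is)) \<and>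
     (\<forall>l\<ge>2. fps_nth f (2*l+1) = (\<Sum>is\<in>comps (2*l+1). comp_term f b is) \<and>
             fps_nth f (2*l+1) = fps_nth f 2 * fps_nth f (2*l)
                                  + (\<Sum>is\<in>comps' (2*l+1) l. comp_term f b is))"

end

theory Submission
  imports Defs
begin

unbundle fps_syntax


definition Ck :: "'a::field fps \<Rightarrow> (nat \<Rightarrow> 'a) \<Rightarrow> nat \<Rightarrow> nat \<Rightarrow> 'a" where
  "Ck f b n k = (\<Sum>xs\<in>comps_between n k k. comp_term f b xs)"

lemma finite_cb: "finite (comps_between n lo hi)"
proof -
  have "comps_between n lo hi \<subseteq> {xs. set xs \<subseteq> {0..n} \<and> length xs \<le> hi}"
    unfolding comps_between_def using member_le_sum_list by fastforce
  moreover have "finite {xs. set xs \<subseteq> {0..n} \<and> length xs \<le> hi}"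
    by (rule finite_lists_length_le) simp
  ultimately show ?thesis by (rule finite_subset)
qed

lemma cb_split: "(\<Sum>xs\<in>comps_between n lo hi. comp_term f b xs) = (\<Sum>k=lo..hi. Ck f b n k)"
proof -
  have "comps_between n lo hi = (\<Union>k\<in>{lo..hi}. comps_between n k k)"
    unfolding comps_between_def by auto
  then have "(\<Sum>xs\<in>comps_between n lo hi. comp_term f b xs)
     = (\<Sum>k\<in>{lo..hi}. (\<Sum>xs\<in>comps_between n k k. comp_term f b xs))"
    using finite_cb[of n]
    by (simp, subst sum.UNION_disjoint) (auto simp: comps_between_def)
  then show ?thesis by (simp add: Ck_def)
qed

lemma two_len_le: "(\<forall>i\<in>set xs. 2 \<le> i) \<Longrightarrow> 2 * length xs \<le> sum_list (xs::nat list)"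
  by (induction xs) auto

lemma two_len_eq: "(\<forall>i\<in>set xs. 2 \<le> i) \<Longrightarrow> sum_list xs = 2 * length xs \<Longrightarrow> \<forall>i\<in>set (xs::nat list). i = 2"
proof (induction xs)
  case (Cons a xs)
  then have "2 * length xs \<le> sum_list xs" using two_len_le by auto
  with Cons show ?case by auto
qed auto

lemma ct_zero:
  assumes "fps_nth f 0 = 0" "1 \<in> set xs"
  shows "comp_term f b xs = 0"
proof -
  have "ftil f 1 = 0" using assms by (simp add: ftil_def)
  then have "0 \<in> set (map (ftil f) xs)" using assms(2) by force
  then show ?thesis by (simp add: comp_term_def prod_list_zero_iff)
qed

lemma Ck_zero:
  assumes "fps_nth f 0 = 0" "n < 2 * k"
  shows "Ck f b n k = 0"
  unfolding Ck_def
proof (rule sum.neutral, rule ballI)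
  fix xs assume "xs \<in> comps_between n k k"
  then have p: "\<forall>i\<in>set xs. 0 < i" "sum_list xs = n" "length xs = k"
    by (auto simp: comps_between_def)
  have "1 \<in> set xs"
  proof (rule ccontr)
    assume "1 \<notin> set xs"
    then have "\<forall>i\<in>set xs. 2 \<le> i" using p(1) by (metis One_nat_def Suc_1 Suc_leI le_neq_implies_less)
    then show False using two_len_le[of xs] p assms by simp
  qed
  then show "comp_term f b xs = 0" using ct_zero assms by blast
qed

lemma Ck_top:
  assumes "fps_nth f 0 = 0" "1 \<le> l"
  shows "Ck f b (2*l) l = b (l - 1) * (fps_nth f 1)^l"
proof -
  have mem: "replicate l 2 \<in> comps_between (2*l) l l"
    by (auto simp: comps_between_def sum_list_replicate)
  have "Ck f b (2*l) l = (\<Sum>xs\<in>{replicate l 2}. comp_term f b xs)"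
    unfolding Ck_def
  proof (rule sum.mono_neutral_right)
    show "finite (comps_between (2 * l) l l)" by (rule finite_cb)
    show "{replicate l 2} \<subseteq> comps_between (2 * l) l l" using mem by simp
    show "\<forall>i\<in>comps_between (2 * l) l l - {replicate l 2}. comp_term f b i = 0"
    proof
      fix xs assume a: "xs \<in> comps_between (2 * l) l l - {replicate l 2}"
      then have p: "\<forall>i\<in>set xs. 0 < i" "sum_list xs = 2*l" "length xs = l"
        by (auto simp: comps_between_def)
      have "1 \<in> set xs"
      proof (rule ccontr)
        assume "1 \<notin> set xs"
        then have "\<forall>i\<in>set xs. 2 \<le> i" using p(1) by (metis One_nat_def Suc_1 Suc_leI le_neq_implies_less)
        then have "\<forall>i\<in>set xs. i = 2" using two_len_eq p by simp
        then have "xs = replicate l 2" using p(3) by (metis replicate_length_same)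
        then show False using a by simp
      qed
      then show "comp_term f b xs = 0" using ct_zero assms by blast
    qed
  qed
  also have "\<dots> = b (l - 1) * (fps_nth f 1)^l"
    using assms by (simp add: comp_term_def btil_def ftil_def prod_list_replicate)
  finally show ?thesis .
qed

lemma Ck_one:
  assumes "1 \<le> n"
  shows "Ck f b n 1 = b 0 * fps_nth f (n - 1)"
proof -
  have "comps_between n 1 1 = {[n]}"
  proof (intro set_eqI iffI)
    fix x assume "x \<in> comps_between n 1 1"
    then obtain y where "x = [y]" "y = n" unfolding comps_between_def
      by (auto simp: length_Suc_conv dest!: sym[of "Suc 0"])
    then show "x \<in> {[n]}" by simp
  qed (use assms in \<open>auto simp: comps_between_def\<close>)
  then show ?thesis using assms by (simp add: Ck_def comp_term_def btil_def ftil_def)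
qed

lemma Ck_trunc:
  assumes "fps_nth f 0 = 0" "hi \<le> hi'" "n < 2 * Suc hi"
  shows "(\<Sum>k=lo..hi'. Ck f b n k) = (\<Sum>k=lo..hi. Ck f b n k)"
  by (rule sum.mono_neutral_right) (use assms in \<open>auto intro!: Ck_zero\<close>)

definition Sn :: "'a::field fps \<Rightarrow> (nat \<Rightarrow> 'a) \<Rightarrow> nat \<Rightarrow> 'a" where
  "Sn f b n = (\<Sum>xs\<in>comps n. comp_term f b xs)"

lemma Sn_Ck: "Sn f b n = (\<Sum>k=1..n. Ck f b n k)"
  unfolding Sn_def comps_def comps_le_def by (rule cb_split)

lemma Sn_even:
  assumes "fps_nth f 0 = 0" "1 \<le> l"
  shows "Sn f b (2*l) = (\<Sum>xs\<in>comps_le (2*l) (l-1). comp_term f b xs) + b (l - 1) * (fps_nth f 1)^l"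
proof -
  have "Sn f b (2*l) = (\<Sum>k=1..l. Ck f b (2*l) k)"
    unfolding Sn_Ck by (rule Ck_trunc) (use assms in auto)
  also have "\<dots> = (\<Sum>k=1..Suc (l-1). Ck f b (2*l) k)" using assms by simp
  also have "\<dots> = (\<Sum>k=1..l-1. Ck f b (2*l) k) + Ck f b (2*l) l"
    using assms by (subst sum.cl_ivl_Suc) auto
  finally show ?thesis using Ck_top[OF assms] unfolding comps_le_def cb_split by simp
qed

lemma Sn_odd:
  assumes "fps_nth f 0 = 0" "1 \<le> l"
  shows "Sn f b (2*l+1) = b 0 * fps_nth f (2*l) + (\<Sum>xs\<in>comps' (2*l+1) l. comp_term f b xs)"
proof -
  have "Sn f b (2*l+1) = (\<Sum>k=1..l. Ck f b (2*l+1) k)"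
    unfolding Sn_Ck by (rule Ck_trunc) (use assms in auto)
  also have "\<dots> = Ck f b (2*l+1) 1 + (\<Sum>k=Suc 1..l. Ck f b (2*l+1) k)"
    using assms by (subst sum.atLeast_Suc_atMost) auto
  finally show ?thesis using Ck_one[of "2*l+1" f b] unfolding comps'_def cb_split by (simp add: numeral_2_eq_2)
qed

lemma Sn_0: "Sn f b 0 = 0" by (simp add: Sn_Ck)

lemma Sn_1: "fps_nth f 0 = 0 \<Longrightarrow> Sn f b 1 = 0" using Ck_one[of 1 f b] by (simp add: Sn_Ck)

lemma le_2_0: "(\<Sum>xs\<in>comps_le 2 0. comp_term f b xs) = 0"
  unfolding comps_le_def cb_split by simp

lemma comps'_3: "(\<Sum>xs\<in>comps' 3 1. comp_term f b xs) = 0"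
  unfolding comps'_def cb_split by simp

lemma comb_equiv:
  assumes f0: "fps_nth f 0 = 0"
  shows "(\<forall>n. fps_nth f n = (if n = 1 then 1 else 0) + Sn f b n) \<longleftrightarrow> thm2p4_conditions f b"
proof
  assume P: "\<forall>n. fps_nth f n = (if n = 1 then 1 else 0) + Sn f b n"
  have f1: "fps_nth f 1 = 1" using P Sn_1[OF f0, of b] by auto
  have b0: "b 0 = fps_nth f 2"
    using P[rule_format, of 2] Sn_even[OF f0, of 1 b] f1 le_2_0[of f b] by simp
  have f3: "fps_nth f 3 = (fps_nth f 2)^2"
    using P[rule_format, of 3] Sn_odd[OF f0, of 1 b] comps'_3[of f b] b0
    by (simp add: power2_eq_square)
  have ev: "\<forall>l\<ge>1. b (l - 1) = fps_nth f (2*l) - (\<Sum>xs\<in>comps_le (2*l) (l - 1). comp_term f b xs)"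
  proof (intro allI impI)
    fix l :: nat assume "1 \<le> l"
    then show "b (l - 1) = fps_nth f (2*l) - (\<Sum>xs\<in>comps_le (2*l) (l - 1). comp_term f b xs)"
      using P[rule_format, of "2*l"] Sn_even[OF f0, of l b] f1 by simp
  qed
  have od: "\<forall>l\<ge>2. fps_nth f (2*l+1) = (\<Sum>xs\<in>comps (2*l+1). comp_term f b xs) \<and>
             fps_nth f (2*l+1) = fps_nth f 2 * fps_nth f (2*l)
                                  + (\<Sum>xs\<in>comps' (2*l+1) l. comp_term f b xs)"
  proof (intro allI impI)
    fix l :: nat assume "2 \<le> l"
    then show "fps_nth f (2*l+1) = (\<Sum>xs\<in>comps (2*l+1). comp_term f b xs) \<and>
             fps_nth f (2*l+1) = fps_nth f 2 * fps_nth f (2*l)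
                                  + (\<Sum>xs\<in>comps' (2*l+1) l. comp_term f b xs)"
      using P[rule_format, of "2*l+1"] Sn_odd[OF f0, of l b] b0 by (simp add: Sn_def)
  qed
  show "thm2p4_conditions f b" unfolding thm2p4_conditions_def using f1 f3 ev od by blast
next
  assume C: "thm2p4_conditions f b"
  then have f1: "fps_nth f 1 = 1" and f3: "fps_nth f 3 = (fps_nth f 2)^2"
    and ev: "\<And>l. l\<ge>1 \<Longrightarrow> b (l - 1) = fps_nth f (2*l) - (\<Sum>xs\<in>comps_le (2*l) (l - 1). comp_term f b xs)"
    and od: "\<And>l. l\<ge>2 \<Longrightarrow> fps_nth f (2*l+1) = (\<Sum>xs\<in>comps (2*l+1). comp_term f b xs)"
    unfolding thm2p4_conditions_def by auto
  have b0: "b 0 = fps_nth f 2" using ev[of 1] le_2_0[of f b] by simp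
  show "\<forall>n. fps_nth f n = (if n = 1 then 1 else 0) + Sn f b n"
  proof
    fix n :: nat
    obtain l where "n = 2*l \<or> n = 2*l+1" by (metis oddE evenE)
    then show "fps_nth f n = (if n = 1 then 1 else 0) + Sn f b n"
    proof
      assume n: "n = 2*l"
      show ?thesis
      proof (cases "l = 0")
        case True then show ?thesis using n f0 Sn_0[of f b] by simp
      next
        case False
        then show ?thesis using n ev[of l] Sn_even[OF f0, of l b] f1 by simp
      qed
    next
      assume n: "n = 2*l+1"
      consider "l = 0" | "l = 1" | "l \<ge> 2" by linarith
      then show ?thesis
      proof cases
        case 1 then show ?thesis using n f1 Sn_1[OF f0, of b] by simp
      next
        case 2 then show ?thesis using n f3 b0 Sn_odd[OF f0, of 1 b] comps'_3[of f b]
          by (simp add: power2_eq_square)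
      next
        case 3 then show ?thesis using n od[of l] by (simp add: Sn_def)
      qed
    qed
  qed
qed


definition hh :: "'a::field fps \<Rightarrow> (nat \<Rightarrow> 'a) \<Rightarrow> nat \<Rightarrow> 'a" where
  "hh f b n = (\<Sum>j\<le>n. b j * ((fps_X * f)^(Suc j)) $ n)"

lemma Fnth: "(fps_X * f) $ i = ftil f i"
  by (simp add: ftil_def)

lemma powF_nth:
  "((fps_X * (f::'a::field fps))^(Suc m)) $ n = (\<Sum>v\<in>natpermute n (Suc m). prod_list (map (ftil f) v))"
proof -
  have "((fps_X * f)^(Suc m)) $ n = (\<Sum>v\<in>natpermute n (m+1). prod (\<lambda>j. (fps_X * f) $ (v!j)) {0..m})"
    by (rule fps_power_nth_Suc)
  also have "\<dots> = (\<Sum>v\<in>natpermute n (Suc m). prod_list (map (ftil f) v))"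
  proof (rule sum.cong)
    fix v assume "v \<in> natpermute n (Suc m)"
    then have len: "length v = Suc m" by (simp add: natpermute_def)
    have "prod_list (map (ftil f) v) = prod (\<lambda>i. map (ftil f) v ! i) {0..<Suc m}"
      using len by (simp add: prod.list_conv_set_nth)
    also have "\<dots> = prod (\<lambda>j. (fps_X * f) $ (v!j)) {0..m}"
      using len by (intro prod.cong) (auto simp: ftil_def)
    finally show "prod (\<lambda>j. (fps_X * f) $ (v!j)) {0..m} = prod_list (map (ftil f) v)" by simp
  qed simp
  finally show ?thesis .
qed

lemma natpermute_cb:
  assumes f0: "fps_nth f 0 = 0"
  shows "(\<Sum>v\<in>natpermute n k. prod_list (map (ftil f) v)) = (\<Sum>v\<in>comps_between n k k. prod_list (map (ftil f) v))"
proof (rule sum.mono_neutral_right)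
  show "finite (natpermute n k)" by (rule natpermute_finite)
  show "comps_between n k k \<subseteq> natpermute n k"
    by (auto simp: comps_between_def natpermute_def)
  show "\<forall>v\<in>natpermute n k - comps_between n k k. prod_list (map (ftil f) v) = 0"
  proof
    fix v assume "v \<in> natpermute n k - comps_between n k k"
    then have "0 \<in> set v" by (auto simp: comps_between_def natpermute_def)
    then have "0 \<in> set (map (ftil f) v)" by (force simp: ftil_def)
    then show "prod_list (map (ftil f) v) = 0" by (simp add: prod_list_zero_iff)
  qed
qed

lemma hh_Sn:
  assumes f0: "fps_nth f 0 = 0"
  shows "hh f b n = Sn f b n"
proof -
  have "hh f b n = (\<Sum>j\<le>n. Ck f b n (Suc j))"
    unfolding hh_def
  proof (rule sum.cong)
    fix j
    have "b j * ((fps_X * f)^(Suc j)) $ n = b j * (\<Sum>v\<in>comps_between n (Suc j) (Suc j). prod_list (map (ftil f) v))"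
      by (simp only: powF_nth natpermute_cb[OF f0])
    also have "\<dots> = Ck f b n (Suc j)"
      unfolding Ck_def comp_term_def sum_distrib_left
    proof (intro sum.cong refl)
      fix v assume "v \<in> comps_between n (Suc j) (Suc j)"
      then have "length v = Suc j" by (simp add: comps_between_def)
      then show "b j * prod_list (map (ftil f) v) = btil b (length v) * prod_list (map (ftil f) v)"
        by (simp add: btil_def)
    qed
    finally show "b j * ((fps_X * f)^(Suc j)) $ n = Ck f b n (Suc j)" .
  qed simp
  also have "\<dots> = (\<Sum>k=Suc 0..Suc n. Ck f b n k)"
    unfolding sum.atLeast_Suc_atMost_Suc_shift comp_def atMost_atLeast0 ..
  also have "\<dots> = (\<Sum>k=1..n. Ck f b n k)"
    using Ck_trunc[of f n "Suc n" n b 1] f0 by simp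
  finally show ?thesis by (simp add: Sn_Ck)
qed

lemma GF: "(G::'a::field fps) * (fps_X * f)^k = fps_X^k * (G * f^k)"
  by (simp add: power_mult_distrib mult_ac)

lemma GF_zero: "m < k \<Longrightarrow> ((G::'a::field fps) * (fps_X * f)^k) $ m = 0"
  by (simp only: GF fps_X_power_mult_nth) simp

lemma GH:
  fixes G f :: "'a::field fps"
  shows "(G * Abs_fps (hh f b)) $ m = (\<Sum>j\<le>m. b j * (G * (fps_X * f)^(Suc j)) $ m)"
proof -
  have "(G * Abs_fps (hh f b)) $ m = (\<Sum>i=0..m. G$i * hh f b (m - i))"
    by (simp add: fps_mult_nth)
  also have "\<dots> = (\<Sum>i=0..m. \<Sum>j\<le>m. G$i * (b j * ((fps_X * f)^(Suc j)) $ (m - i)))"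
  proof (rule sum.cong)
    fix i assume "i \<in> {0..m}"
    have "hh f b (m - i) = (\<Sum>j\<le>m. b j * ((fps_X * f)^(Suc j)) $ (m - i))"
      unfolding hh_def
    proof (rule sum.mono_neutral_left)
      show "\<forall>j\<in>{..m} - {..m - i}. b j * ((fps_X * f)^(Suc j)) $ (m - i) = 0"
      proof
        fix j assume "j \<in> {..m} - {..m - i}"
        then have "m - i < Suc j" by auto
        from GF_zero[OF this, of 1 f] show "b j * ((fps_X * f)^(Suc j)) $ (m - i) = 0"
          by (simp del: power_Suc)
      qed
    qed auto
    then show "G$i * hh f b (m - i) = (\<Sum>j\<le>m. G$i * (b j * ((fps_X * f)^(Suc j)) $ (m - i)))"
      by (simp add: sum_distrib_left)
  qed simp
  also have "\<dots> = (\<Sum>j\<le>m. \<Sum>i=0..m. G$i * (b j * ((fps_X * f)^(Suc j)) $ (m - i)))"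
    by (rule sum.swap)
  also have "\<dots> = (\<Sum>j\<le>m. b j * (G * (fps_X * f)^(Suc j)) $ m)"
    by (simp only: fps_mult_nth[of G] sum_distrib_left mult.left_commute)
  finally show ?thesis .
qed

lemma entry_eq:
  assumes f0: "fps_nth f 0 = 0"
  shows "riordan_entry g f n k = (g * f^k) $ n"
proof (cases "k \<le> n")
  case False
  define h where "h = fps_shift 1 f"
  have fh: "f = fps_X * h" unfolding h_def by (rule fps_ext) (use f0 in simp)
  have "(g * f^k) $ n = (fps_X^k * (g * h^k)) $ n" unfolding fh GF ..
  then show ?thesis using False by (simp add: riordan_entry_def fps_X_power_mult_nth)
qed (simp add: riordan_entry_def)

lemma abc: "((a::'a::ab_group_add) = b + c) \<longleftrightarrow> (a - b - c = 0)"
  by (simp add: algebra_simps)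

lemma B_iff:
  fixes g f :: "'a::field fps"
  assumes r: "riordan g f"
  shows "is_B_seq_I g f b \<longleftrightarrow> (\<forall>n. f $ n = (if n = 1 then 1 else 0) + hh f b n)"
proof -
  have f0: "f $ 0 = 0" and g0: "g $ 0 = 1" and f1: "f $ 1 \<noteq> 0"
    using r by (auto simp: riordan_def)
  define H where "H = Abs_fps (hh f b)"
  define D where "D = f - fps_X - H"
  have D0: "D $ 0 = 0" by (simp add: D_def H_def hh_def f0)
  have step: "(riordan_entry g f (n+1) k = riordan_entry g f n (k-1)
       + (\<Sum>j\<le>n. b j * riordan_entry g f (n-j) (k+j))) \<longleftrightarrow> (g * f^(k-1) * D) $ (n+1) = 0"
    if k: "1 \<le> k" for k n
  proof -
    obtain k' where kk: "k = Suc k'" using k by (cases k) auto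
    define G where "G = g * f^k'"
    have e1: "riordan_entry g f (n+1) k = (G*f) $ (n+1)"
      by (simp add: entry_eq[OF f0] G_def kk mult_ac)
    have e2: "riordan_entry g f n (k-1) = (fps_X * G) $ (n+1)"
      by (simp add: entry_eq[OF f0] G_def kk)
    have e3: "riordan_entry g f (n-j) (k+j) = (G * (fps_X*f)^(Suc j)) $ (n+1)" if j: "j \<le> n" for j
    proof -
      have "(G * (fps_X*f)^(Suc j)) $ (n+1) = (fps_X^(Suc j) * (G * f^(Suc j))) $ (n+1)"
        by (simp only: GF)
      also have "\<dots> = (G * f^(Suc j)) $ (n - j)"
        using j by (simp only: fps_X_power_mult_nth) simp
      also have "G * f^(Suc j) = g * f^(k+j)"
        by (simp add: G_def kk power_add mult_ac)
      finally show ?thesis by (simp add: entry_eq[OF f0])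
    qed
    have e4: "(\<Sum>j\<le>n. b j * (G * (fps_X*f)^(Suc j)) $ (n+1)) = (G*H) $ (n+1)"
    proof -
      have "(G*H) $ (n+1) = (\<Sum>j\<le>Suc n. b j * (G * (fps_X*f)^(Suc j)) $ (n+1))"
        unfolding H_def by (simp only: GH) simp
      also have "\<dots> = (\<Sum>j\<le>n. b j * (G * (fps_X*f)^(Suc j)) $ (n+1))"
        using GF_zero[of "n+1" "Suc (Suc n)" G f] by (simp del: power_Suc)
      finally show ?thesis by simp
    qed
    have GD: "(G*D) $ (n+1) = (G*f) $ (n+1) - (fps_X*G) $ (n+1) - (G*H) $ (n+1)"
    proof -
      have "G*D = G*f - fps_X*G - G*H" by (simp add: D_def algebra_simps)
      then show ?thesis by simp
    qed
    have e5: "(\<Sum>j\<le>n. b j * riordan_entry g f (n-j) (k+j)) = (G*H) $ (n+1)"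
      using e3 e4 by (metis (no_types, lifting) atMost_iff sum.cong)
    have gd: "g * f^(k-1) * D = G*D" by (simp add: G_def kk)
    show ?thesis unfolding gd GD e1 e2 e5 by (rule abc)
  qed
  have "is_B_seq_I g f b \<longleftrightarrow> (\<forall>k\<ge>1. \<forall>n. (g * f^(k-1) * D) $ (n+1) = 0)"
    unfolding is_B_seq_I_def using step by blast
  also have "\<dots> \<longleftrightarrow> (\<forall>k\<ge>1. g * f^(k-1) * D = 0)"
  proof -
    have "(\<forall>n. (g * f^(k-1) * D) $ (n+1) = 0) \<longleftrightarrow> g * f^(k-1) * D = 0" for k
    proof
      assume a: "\<forall>n. (g * f^(k-1) * D) $ (n+1) = 0"
      show "g * f^(k-1) * D = 0"
      proof (rule fps_ext)
        fix m show "(g * f^(k-1) * D) $ m = 0 $ m"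
          using a D0 by (cases m) auto
      qed
    next
      assume a: "g * f^(k-1) * D = 0"
      show "\<forall>n. (g * f^(k-1) * D) $ (n+1) = 0"
        by (intro allI) (simp only: a fps_zero_nth)
    qed
    then show ?thesis by simp
  qed
  also have "\<dots> \<longleftrightarrow> D = 0"
  proof
    assume "\<forall>k\<ge>1. g * f^(k-1) * D = 0"
    then have "g * D = 0" by (metis le_refl diff_self_eq_0 power_0 mult_1_right)
    moreover have "g \<noteq> 0" using g0 by auto
    ultimately show "D = 0" by simp
  qed simp
  also have "\<dots> \<longleftrightarrow> (\<forall>n. f $ n = (if n = 1 then 1 else 0) + hh f b n)"
    by (auto simp: D_def H_def fps_eq_iff algebra_simps)
  finally show ?thesis .
qed

lemma main:
  fixes g f :: "'a::field fps"
  assumes r: "riordan g f"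
  shows "is_B_seq_I g f b \<longleftrightarrow> thm2p4_conditions f b"
proof -
  have f0: "f $ 0 = 0" using r by (simp add: riordan_def)
  show ?thesis using B_iff[OF r, of b] comb_equiv[OF f0, of b] hh_Sn[OF f0, of b] by simp
qed


theorem theorem2p4:
  shows "(\<forall>(g::real fps) f (b::nat \<Rightarrow> real). riordan g f \<longrightarrow>
            (is_B_seq_I g f b \<longleftrightarrow> thm2p4_conditions f b)) \<and>
         (\<forall>(g::complex fps) f (b::nat \<Rightarrow> complex). riordan g f \<longrightarrow>
            (is_B_seq_I g f b \<longleftrightarrow> thm2p4_conditions f b))"
  by (intro conjI allI impI main)

end
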